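(* Let $G$ be Boidol's group and let $(O_{\rho_k,\lambda_k})_{k\in\mathbb{N}}$ be a properly converging sequence in $\Gamma_3\subset\mathfrak{g}^*/G$ (with $\rho_k\in\mathbb{R}$, $\lambda_k\neq0$) such that $\lim_{k\to\infty}\lambda_k=0$. Then: (1) the sequence $\omega_k:=\rho_k\lambda_k$ converges to some $\omega\in\mathbb{R}$; (2) if $\omega\neq0$, the limit set of the sequence is the two-point set $\{O_{\omega,-1,0},O_{-\omega,1,0}\}$; (3) if $\omega=0$, the limit set of the sequence is $\Gamma_1\cup\Gamma_0$.
   Context: Boidol's group $G$ is the simply connected Lie group with Lie algebra $\mathfrak{g}$ having basis $T,X,Y,Z$ and non-trivial brackets $[T,X]=-X$, $[T,Y]=Y$, $[X,Y]=Z$; concretely $G=\mathbb{R}^4$ with product $(t,x,y,z)\cdot(t',x',y',z')=(t+t',\,e^{t'}x+x',\,e^{-t'}y+y',\,z+z'+\tfrac12(e^{t'}xy'-e^{-t'}x'y))$. Write elements of $\mathfrak{g}^*$ as $aT^*+bX^*+cY^*+dZ^*$. The coadjoint orbits are exactly: for $\rho\in\mathbb{R},\lambda\neq0$, $O_{\rho,\lambda}=\{\frac{\rho\lambda+xy}{\lambda}T^*+xX^*+yY^*+\lambda Z^*: x,y\in\mathbb{R}\}$; for $(\alpha,\beta)\neq(0,0)$, $O_{\alpha,\beta,0}=\{uT^*+e^t\alpha X^*+e^{-t}\beta Y^*: t,u\in\mathbb{R}\}$; for $\tau\in\mathbb{R}$, the singletons $\{\tau T^*\}$. Let $\Gamma_3=\{O_{\rho,\lambda}:\lambda\neq0\}$,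 $\Gamma_1=\{O_{1,0,0},O_{-1,0,0},O_{0,1,0},O_{0,-1,0}\}$, $\Gamma_0=\{\{\tau T^*\}:\tau\in\mathbb{R}\}$. The orbit space $\mathfrak{g}^*/G$ has the quotient topology. The limit set of a sequence in $\mathfrak{g}^*/G$ is the set of all its limits; a sequence is properly converging if it has at least one limit and every subsequence has the same limit set as the whole sequence. *)

theory Defs
  imports "HOL-Analysis.Analysis"
begin

text \<open>Elements of the dual g* are written a T* + b X* + c Y* + d Z*,
  represented as the tuple (a, b, c, d).\<close>

type_synonym gdual = "real \<times> real \<times> real \<times> real"

definition orbit3 :: "real \<Rightarrow> real \<Rightarrow> gdual set" where
  "orbit3 \<rho> l = {((\<rho> * l + x * y) / l, x, y, l) | x y. True}"

definition orbit1 :: "real \<Rightarrow> real \<Rightarrow> gdual set" where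
  "orbit1 \<alpha> \<beta> = {(u, exp t * \<alpha>, exp (- t) * \<beta>, 0) | t u. True}"

definition orbit0 :: "real \<Rightarrow> gdual set" where
  "orbit0 \<tau> = {(\<tau>, 0, 0, 0)}"

definition Gamma3 :: "gdual set set" where
  "Gamma3 = {orbit3 \<rho> l | \<rho> l. l \<noteq> 0}"

definition Gamma1 :: "gdual set set" where
  "Gamma1 = {orbit1 1 0, orbit1 (-1) 0, orbit1 0 1, orbit1 0 (-1)}"

definition Gamma0 :: "gdual set set" where
  "Gamma0 = range orbit0"

definition orbits :: "gdual set set" where
  "orbits = Gamma3 \<union> {orbit1 \<alpha> \<beta> | \<alpha> \<beta>. (\<alpha>, \<beta>) \<noteq> (0, 0)} \<union> Gamma0"

definition orbit_of :: "gdual \<Rightarrow> gdual set" where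
  "orbit_of p = (SOME Q. Q \<in> orbits \<and> p \<in> Q)"

definition orbit_top :: "gdual set topology" where
  "orbit_top = topology (\<lambda>U. U \<subseteq> orbits \<and> open (orbit_of -` U))"

lemma istopology_orbit_top: "istopology (\<lambda>U. U \<subseteq> orbits \<and> open (orbit_of -` U))"
  unfolding istopology_def by (auto simp: vimage_Union intro!: open_UN)

definition limit_set :: "(nat \<Rightarrow> gdual set) \<Rightarrow> gdual set set" where
  "limit_set s = {Q. limitin orbit_top s Q sequentially}"

definition properly_converging :: "(nat \<Rightarrow> gdual set) \<Rightarrow> bool" where
  "properly_converging s \<longleftrightarrow> limit_set s \<noteq> {} \<and>
     (\<forall>r. strict_mono r \<longrightarrow> limit_set (s \<circ> r) = limit_set s)"

end

theory Submission
  imports Defs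
begin

definition canon :: "gdual \<Rightarrow> gdual set" where
  "canon p = (let a = fst p; b = fst (snd p); c = fst (snd (snd p)); d = snd (snd (snd p)) in
     if d \<noteq> 0 then orbit3 ((a*d - b*c)/d) d
     else if b \<noteq> 0 then orbit1 (sgn b) (\<bar>b\<bar>*c)
     else if c \<noteq> 0 then orbit1 0 (sgn c) else orbit0 a)"

lemma orbit1_scale: "orbit1 \<alpha> \<beta> = orbit1 (exp s * \<alpha>) (exp (-s) * \<beta>)"
proof -
  have "(u, exp t * \<alpha>, exp (- t) * \<beta>, 0) \<in> orbit1 (exp s * \<alpha>) (exp (-s) * \<beta>)" for t u
    unfolding orbit1_def
    by (rule CollectI, rule exI[of _ "t - s"], rule exI[of _ u])
       (simp add: mult.assoc[symmetric] exp_add[symmetric])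
  moreover have "(u, exp t * (exp s * \<alpha>), exp (- t) * (exp (-s) * \<beta>), 0) \<in> orbit1 \<alpha> \<beta>" for t u
    unfolding orbit1_def
    by (rule CollectI, rule exI[of _ "t + s"], rule exI[of _ u])
       (simp add: mult.assoc[symmetric] exp_add[symmetric])
  ultimately show ?thesis unfolding orbit1_def[of \<alpha> \<beta>] orbit1_def[of "exp s * \<alpha>"] by blast
qed

lemma orbit1_norm1: "\<alpha> \<noteq> 0 \<Longrightarrow> orbit1 \<alpha> \<beta> = orbit1 (sgn \<alpha>) (\<bar>\<alpha>\<bar> * \<beta>)"
  using orbit1_scale[of \<alpha> \<beta> "- ln \<bar>\<alpha>\<bar>"]
  by (simp add: exp_minus sgn_if field_simps)

lemma orbit1_norm2: "\<beta> \<noteq> 0 \<Longrightarrow> orbit1 0 \<beta> = orbit1 0 (sgn \<beta>)"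
  using orbit1_scale[of 0 \<beta> "ln \<bar>\<beta>\<bar>"]
  by (simp add: exp_minus sgn_if field_simps)

lemma canon_in: "p \<in> canon p"
proof -
  obtain a b c d where p: "p = (a,b,c,d)" by (metis prod.exhaust)
  show ?thesis
  proof (cases "d \<noteq> 0")
    case True
    then show ?thesis unfolding p canon_def orbit3_def
      by (auto intro!: exI[of _ b] exI[of _ c] simp: field_simps)
  next
    case d: False
    show ?thesis
    proof (cases "b \<noteq> 0")
      case True
      then show ?thesis using d unfolding p canon_def orbit1_def
        by (auto intro!: exI[of _ "ln \<bar>b\<bar>"] simp: exp_minus sgn_if field_simps)
    next
      case b: False
      show ?thesis
      proof (cases "c \<noteq> 0")
        case True
        then show ?thesis using d b unfolding p canon_def orbit1_def
          by (auto intro!: exI[of _ "- ln \<bar>c\<bar>"] simp: exp_minus sgn_if field_simps)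
      next
        case False
        then show ?thesis using d b unfolding p canon_def orbit0_def by auto
      qed
    qed
  qed
qed

lemma canon_orbits: "canon p \<in> orbits"
proof -
  have o1: "\<alpha> \<noteq> 0 \<or> \<beta> \<noteq> 0 \<Longrightarrow> orbit1 \<alpha> \<beta> \<in> orbits" for \<alpha> \<beta>
    unfolding orbits_def by blast
  have o3: "l \<noteq> 0 \<Longrightarrow> orbit3 r l \<in> orbits" for r l
    unfolding orbits_def Gamma3_def by blast
  have o0: "orbit0 a \<in> orbits" for a
    unfolding orbits_def Gamma0_def by blast
  show ?thesis unfolding canon_def Let_def
    using o1 o3 o0 by (auto simp: sgn_if)
qed

lemma canon_unique: assumes "Q \<in> orbits" "p \<in> Q" shows "Q = canon p"
  using assms unfolding orbits_def Gamma3_def Gamma0_def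
proof (elim UnE CollectE exE conjE)
  fix \<rho> l assume Q: "Q = orbit3 \<rho> l" and l: "l \<noteq> 0"
  with assms(2) obtain x y where "p = ((\<rho> * l + x * y) / l, x, y, l)" unfolding orbit3_def by auto
  then show ?thesis using Q l unfolding canon_def by (simp add: field_simps)
next
  fix \<alpha> \<beta> assume Q: "Q = orbit1 \<alpha> \<beta>" and ab: "(\<alpha>, \<beta>) \<noteq> (0, 0)"
  with assms(2) obtain t u where p: "p = (u, exp t * \<alpha>, exp (-t) * \<beta>, 0)" unfolding orbit1_def by auto
  show ?thesis
  proof (cases "\<alpha> = 0")
    case True
    then have "\<beta> \<noteq> 0" using ab by auto
    then show ?thesis using True p Q orbit1_norm2[of \<beta>] unfolding canon_def by (simp add: sgn_mult)
  next
    case False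
    then show ?thesis using p Q orbit1_norm1[of \<alpha> \<beta>] unfolding canon_def
      by (simp add: sgn_mult abs_mult exp_minus field_simps)
  qed
next
  assume "Q \<in> range orbit0"
  then obtain \<tau> where "Q = orbit0 \<tau>" by auto
  then show ?thesis using assms(2) unfolding orbit0_def canon_def by auto
qed

lemma orbit_of_canon: "orbit_of p = canon p"
proof -
  have "\<exists>Q. Q \<in> orbits \<and> p \<in> Q" using canon_in canon_orbits by blast
  then have "orbit_of p \<in> orbits \<and> p \<in> orbit_of p" unfolding orbit_of_def by (rule someI_ex)
  then show ?thesis using canon_unique by blast
qed

lemma orbit_of_in: "p \<in> orbit_of p" "orbit_of p \<in> orbits"
  using orbit_of_canon canon_in canon_orbits by auto

lemma orbit_of_eq: "Q \<in> orbits \<Longrightarrow> p \<in> Q \<Longrightarrow> orbit_of p = Q"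
  using orbit_of_canon canon_unique by auto

lemma openin_orbit_top: "openin orbit_top U \<longleftrightarrow> U \<subseteq> orbits \<and> open (orbit_of -` U)"
  unfolding orbit_top_def using istopology_orbit_top by simp

lemma topspace_orbit_top: "topspace orbit_top = orbits"
proof -
  have "orbit_of -` orbits = UNIV" using orbit_of_in by auto
  then have "openin orbit_top orbits" unfolding openin_orbit_top by auto
  then show ?thesis using openin_subset openin_orbit_top by (metis openin_topspace subset_antisym)
qed

lemma suff:
  assumes "Q \<in> orbits" "p \<in> Q" "\<And>k. P k \<in> s k" "\<And>k. s k \<in> orbits" "P \<longlonglongrightarrow> p"
  shows "limitin orbit_top s Q sequentially"
  unfolding limitin_def topspace_orbit_top
proof (intro conjI allI impI)
  show "Q \<in> orbits" by fact
  fix U assume U: "openin orbit_top U \<and> Q \<in> U"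
  then have op: "open (orbit_of -` U)" using openin_orbit_top by blast
  have "p \<in> orbit_of -` U" using U orbit_of_eq[OF assms(1,2)] by simp
  then have "eventually (\<lambda>k. P k \<in> orbit_of -` U) sequentially"
    using op assms(5) topological_tendstoD by blast
  then show "eventually (\<lambda>k. s k \<in> U) sequentially"
    by eventually_elim (use orbit_of_eq[OF assms(4,3)] in auto)
qed

definition invar :: "(gdual \<Rightarrow> real) \<Rightarrow> bool" where
  "invar F \<longleftrightarrow> (\<forall>Q\<in>orbits. \<forall>p\<in>Q. \<forall>q\<in>Q. F p = F q)"

lemma nec:
  assumes "limitin orbit_top s Q sequentially" "invar F" "continuous_on UNIV F" "p \<in> Q"
    "\<And>k. q k \<in> s k"
  shows "(\<lambda>k. F (q k)) \<longlonglongrightarrow> F p"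
proof (rule tendstoI)
  fix e :: real assume e: "e > 0"
  have Q: "Q \<in> orbits" using assms(1) topspace_orbit_top unfolding limitin_def by auto
  define U where "U = {R \<in> orbits. \<forall>r\<in>R. dist (F r) (F p) < e}"
  have "orbit_of -` U = {x. dist (F x) (F p) < e}"
  proof (intro set_eqI iffI)
    fix x assume "x \<in> orbit_of -` U"
    then show "x \<in> {x. dist (F x) (F p) < e}" using orbit_of_in(1)[of x] unfolding U_def by auto
  next
    fix x assume x: "x \<in> {x. dist (F x) (F p) < e}"
    have "\<forall>r\<in>orbit_of x. F r = F x"
      using assms(2) orbit_of_in[of x] unfolding invar_def by metis
    then show "x \<in> orbit_of -` U" using x orbit_of_in(2)[of x] unfolding U_def by auto
  qed
  moreover have "open {x. dist (F x) (F p) < e}"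
    using assms(3) by (intro open_Collect_less continuous_intros) (auto simp: continuous_on_eq_continuous_at)
  ultimately have "openin orbit_top U" unfolding openin_orbit_top U_def by auto
  moreover have "Q \<in> U" unfolding U_def using Q assms(2,4) e unfolding invar_def by fastforce
  ultimately have "eventually (\<lambda>k. s k \<in> U) sequentially"
    using assms(1) unfolding limitin_def by blast
  then show "eventually (\<lambda>k. dist (F (q k)) (F p) < e) sequentially"
    by eventually_elim (use assms(5) in \<open>auto simp: U_def\<close>)
qed

definition Cas :: "gdual \<Rightarrow> real" where
  "Cas p = fst p * snd (snd (snd p)) - fst (snd p) * fst (snd (snd p))"

definition D4 :: "gdual \<Rightarrow> real" where
  "D4 p = snd (snd (snd p))"

lemma cont_Cas: "continuous_on UNIV Cas" unfolding Cas_def by (intro continuous_intros)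
lemma cont_D4: "continuous_on UNIV D4" unfolding D4_def by (intro continuous_intros)

lemma invar_I:
  assumes "\<And>r l x y. l \<noteq> 0 \<Longrightarrow> F ((r * l + x * y) / l, x, y, l) = Ga r l"
    "\<And>a b t u. F (u, exp t * a, exp (-t) * b, 0) = Gb a b"
    "\<And>a. F (a, 0, 0, 0) = Gc a"
  shows "invar F"
  unfolding invar_def
proof (intro ballI)
  fix Q p q assume Q: "Q \<in> orbits" and p: "p \<in> Q" and q: "q \<in> Q"
  from Q show "F p = F q" unfolding orbits_def Gamma3_def Gamma0_def
  proof (elim UnE CollectE exE conjE)
    fix r l assume "Q = orbit3 r l" "l \<noteq> 0"
    then show ?thesis using p q assms(1) unfolding orbit3_def by auto
  next
    fix a b assume "Q = orbit1 a b"
    then show ?thesis using p q assms(2) unfolding orbit1_def by auto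
  next
    assume "Q \<in> range orbit0"
    then show ?thesis using p q unfolding orbit0_def by auto
  qed
qed

lemma invar_D4: "invar D4"
  by (rule invar_I[where Ga="\<lambda>r l. l" and Gb="\<lambda>a b. 0" and Gc="\<lambda>a. 0"]) (auto simp: D4_def)

lemma invar_Cas: "invar Cas"
  by (rule invar_I[where Ga="\<lambda>r l. r * l" and Gb="\<lambda>a b. - (a * b)" and Gc="\<lambda>a. 0"])
     (auto simp: Cas_def field_simps exp_minus)


lemma sqrt_abs_mult: "sqrt \<bar>z\<bar> * sqrt z = (z::real)"
proof (cases "z \<ge> 0")
  case True then show ?thesis by (simp add: real_sqrt_mult[symmetric])
next
  case False
  then have "sqrt z = - sqrt (- z)" "\<bar>z\<bar> = - z" using real_sqrt_minus[of "-z"] by auto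
  then show ?thesis using False by simp
qed

lemma orbits_nonempty: "Q \<in> orbits \<Longrightarrow> \<exists>p. p \<in> Q"
  unfolding orbits_def Gamma3_def Gamma0_def orbit3_def orbit1_def orbit0_def by blast

lemma in_orbit1_0: "(u, a, b, 0) \<in> orbit1 a b"
  unfolding orbit1_def by (rule CollectI, rule exI[of _ 0], rule exI[of _ u]) simp

theorem proposition2p3:
  fixes \<rho> l :: "nat \<Rightarrow> real"
  assumes "\<And>k. l k \<noteq> 0"
    and "properly_converging (\<lambda>k. orbit3 (\<rho> k) (l k))"
    and "l \<longlonglongrightarrow> 0"
  shows "\<exists>\<omega>. (\<lambda>k. \<rho> k * l k) \<longlonglongrightarrow> \<omega> \<and>
           (\<omega> \<noteq> 0 \<longrightarrow> limit_set (\<lambda>k. orbit3 (\<rho> k) (l k)) = {orbit1 \<omega> (-1), orbit1 (-\<omega>) 1}) \<and>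
           (\<omega> = 0 \<longrightarrow> limit_set (\<lambda>k. orbit3 (\<rho> k) (l k)) = Gamma1 \<union> Gamma0)"
proof -
  define s where "s = (\<lambda>k. orbit3 (\<rho> k) (l k))"
  define w where "w = (\<lambda>k. \<rho> k * l k)"
  have sorb: "s k \<in> orbits" for k
    unfolding s_def orbits_def Gamma3_def using assms(1) by blast
  have mem3: "(a, x, y, l k) \<in> s k" if "w k + x * y = a * l k" for a x y k
    unfolding s_def orbit3_def
    by (rule CollectI, rule exI[of _ x], rule exI[of _ y])
       (use that assms(1)[of k] in \<open>auto simp: w_def field_simps\<close>)
  have qk: "(\<rho> k, 0, 0, l k) \<in> s k" for k by (rule mem3) (simp add: w_def)
  have nec1: "w \<longlonglongrightarrow> Cas p \<and> D4 p = 0" if "Q \<in> limit_set s" "p \<in> Q" for Q p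
  proof -
    have lim: "limitin orbit_top s Q sequentially" using that(1) unfolding limit_set_def by auto
    have "(\<lambda>k. Cas (\<rho> k, 0, 0, l k)) \<longlonglongrightarrow> Cas p"
      by (rule nec[OF lim invar_Cas cont_Cas that(2) qk])
    moreover have "(\<lambda>k. D4 (\<rho> k, 0, 0, l k)) \<longlonglongrightarrow> D4 p"
      by (rule nec[OF lim invar_D4 cont_D4 that(2) qk])
    ultimately show ?thesis using assms(3) LIMSEQ_unique
      by (auto simp: Cas_def D4_def w_def)
  qed
  have nec2: "\<exists>a b c. Q = canon (a, b, c, 0) \<and> - (b * c) = Cas p0" if "Q \<in> limit_set s" "p0 \<in> Q'" "Q' \<in> limit_set s" for Q Q' p0
  proof -
    have "Q \<in> orbits" using that(1) topspace_orbit_top unfolding limit_set_def limitin_def by auto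
    then obtain p where p: "p \<in> Q" using orbits_nonempty by blast
    obtain a b c d where pe: "p = (a,b,c,d)" by (metis prod.exhaust)
    have "w \<longlonglongrightarrow> Cas p" "D4 p = 0" using nec1[OF that(1) p] by auto
    moreover have "w \<longlonglongrightarrow> Cas p0" using nec1[OF that(3,2)] by auto
    ultimately have "Cas p = Cas p0" "d = 0" using LIMSEQ_unique pe by (auto simp: D4_def)
    moreover have "Q = canon p" using canon_unique \<open>Q \<in> orbits\<close> p by blast
    ultimately show ?thesis using pe by (auto simp: Cas_def)
  qed
  have reach: "Q \<in> limit_set s" if "x \<longlonglongrightarrow> b" "y \<longlonglongrightarrow> c" "\<And>k. w k + x k * y k = a * l k"
    "Q \<in> orbits" "(a, b, c, 0) \<in> Q" for x y a b c Q
  proof -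
    have "(\<lambda>k. (a, x k, y k, l k)) \<longlonglongrightarrow> (a, b, c, 0)"
      by (intro tendsto_Pair tendsto_const that assms(3))
    then show ?thesis unfolding limit_set_def
      by (intro CollectI suff[OF that(4,5) _ sorb]) (rule mem3[OF that(3)])
  qed
  obtain Q0 where Q0: "Q0 \<in> limit_set s" using assms(2) unfolding properly_converging_def s_def by blast
  then have "Q0 \<in> orbits" using topspace_orbit_top unfolding limit_set_def limitin_def by auto
  then obtain p0 where p0: "p0 \<in> Q0" using orbits_nonempty by blast
  define \<omega> where "\<omega> = Cas p0"
  have wlim: "w \<longlonglongrightarrow> \<omega>" using nec1[OF Q0 p0] \<omega>_def by auto
  have o1: "orbit1 \<alpha> \<beta> \<in> orbits" if "\<alpha> \<noteq> 0 \<or> \<beta> \<noteq> 0" for \<alpha> \<beta>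
    using that unfolding orbits_def by blast
  have A: "limit_set s = {orbit1 \<omega> (-1), orbit1 (-\<omega>) 1}" if nz: "\<omega> \<noteq> 0"
  proof
    show "limit_set s \<subseteq> {orbit1 \<omega> (-1), orbit1 (-\<omega>) 1}"
    proof
      fix Q assume "Q \<in> limit_set s"
      then obtain a b c where Q: "Q = canon (a, b, c, 0)" and bc: "- (b * c) = \<omega>"
        using nec2[OF _ p0 Q0] \<omega>_def by blast
      have b: "b \<noteq> 0" using bc nz by auto
      have Qe: "Q = orbit1 (sgn b) (\<bar>b\<bar> * c)" using Q b unfolding canon_def by simp
      have e1: "orbit1 \<omega> (-1) = orbit1 (sgn \<omega>) (- \<bar>\<omega>\<bar>)" using orbit1_norm1[OF nz, of "-1"] by simp
      have e2: "orbit1 (-\<omega>) 1 = orbit1 (- sgn \<omega>) \<bar>\<omega>\<bar>" using orbit1_norm1[of "-\<omega>" 1] nz by simp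
      show "Q \<in> {orbit1 \<omega> (-1), orbit1 (-\<omega>) 1}"
      proof (cases "sgn b = sgn \<omega>")
        case True
        have "\<bar>b\<bar> * c = - \<bar>\<omega>\<bar>" using True bc b nz
          by (auto simp: sgn_if abs_if split: if_splits)
        then show ?thesis using Qe e1 True by simp
      next
        case False
        then have "sgn b = - sgn \<omega>" using b nz by (auto simp: sgn_if split: if_splits)
        moreover have "\<bar>b\<bar> * c = \<bar>\<omega>\<bar>" using False bc b nz
          by (auto simp: sgn_if abs_if split: if_splits)
        ultimately show ?thesis using Qe e2 by simp
      qed
    qed
  next
    have "orbit1 \<omega> (-1) \<in> limit_set s"
      by (rule reach[where x="\<lambda>k. \<omega>" and y="\<lambda>k. - w k / \<omega>" and a=0])
         (use nz wlim in \<open>auto intro!: tendsto_eq_intros o1 in_orbit1_0\<close>)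
    moreover have "orbit1 (-\<omega>) 1 \<in> limit_set s"
      by (rule reach[where x="\<lambda>k. -\<omega>" and y="\<lambda>k. w k / \<omega>" and a=0])
         (use nz wlim in \<open>auto intro!: tendsto_eq_intros o1 in_orbit1_0\<close>)
    ultimately show "{orbit1 \<omega> (-1), orbit1 (-\<omega>) 1} \<subseteq> limit_set s" by blast
  qed
  have B: "limit_set s = Gamma1 \<union> Gamma0" if z: "\<omega> = 0"
  proof
    show "limit_set s \<subseteq> Gamma1 \<union> Gamma0"
    proof
      fix Q assume "Q \<in> limit_set s"
      then obtain a b c where Q: "Q = canon (a, b, c, 0)" and bc: "b * c = 0"
        using nec2[OF _ p0 Q0] \<omega>_def z by fastforce
      show "Q \<in> Gamma1 \<union> Gamma0"
        using Q bc unfolding canon_def Gamma1_def Gamma0_def by (auto simp: sgn_if)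
    qed
  next
    have w0: "w \<longlonglongrightarrow> 0" using wlim z by simp
    have "orbit1 1 0 \<in> limit_set s"
      by (rule reach[where x="\<lambda>k. 1" and y="\<lambda>k. - w k" and a=0])
         (use w0 in \<open>auto intro!: tendsto_eq_intros o1 in_orbit1_0\<close>)
    moreover have "orbit1 (-1) 0 \<in> limit_set s"
      by (rule reach[where x="\<lambda>k. -1" and y="\<lambda>k. w k" and a=0])
         (use w0 in \<open>auto intro!: tendsto_eq_intros o1 in_orbit1_0\<close>)
    moreover have "orbit1 0 1 \<in> limit_set s"
      by (rule reach[where x="\<lambda>k. - w k" and y="\<lambda>k. 1" and a=0])
         (use w0 in \<open>auto intro!: tendsto_eq_intros o1 in_orbit1_0\<close>)
    moreover have "orbit1 0 (-1) \<in> limit_set s"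
      by (rule reach[where x="\<lambda>k. w k" and y="\<lambda>k. -1" and a=0])
         (use w0 in \<open>auto intro!: tendsto_eq_intros o1 in_orbit1_0\<close>)
    moreover have "orbit0 \<tau> \<in> limit_set s" for \<tau>
    proof -
      define zz where "zz = (\<lambda>k. \<tau> * l k - w k)"
      have zz0: "zz \<longlonglongrightarrow> 0" unfolding zz_def using w0 assms(3)
        by (auto intro!: tendsto_eq_intros)
      have x0: "(\<lambda>k. sqrt \<bar>zz k\<bar>) \<longlonglongrightarrow> 0" using zz0 by (auto intro!: tendsto_eq_intros)
      have y0: "(\<lambda>k. sqrt (zz k)) \<longlonglongrightarrow> 0" using zz0 by (auto intro!: tendsto_eq_intros)
      have eq: "w k + sqrt \<bar>zz k\<bar> * sqrt (zz k) = \<tau> * l k" for k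
        by (simp add: sqrt_abs_mult zz_def)
      show ?thesis
        by (rule reach[OF x0 y0 eq]) (auto simp: orbits_def Gamma0_def orbit0_def)
    qed
    ultimately show "Gamma1 \<union> Gamma0 \<subseteq> limit_set s" unfolding Gamma1_def Gamma0_def by blast
  qed
  show ?thesis using wlim A B unfolding s_def w_def by blast
qed

end
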